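(* Let $A\subseteq B$ be an admissible extension (under the standing assumptions below). Then for every $\psi\in\mathrm{Min}(A)$ there exists $\mu\in\mathrm{Min}(B)$ such that $\mu\cap\nabla_A=\psi$.
   Context: For an algebra $M$ of a fixed signature: $\mathrm{Con}(M)$ is its congruence lattice with bottom $\Delta_M$ and top $\nabla_M=M^2$. $[\cdot,\cdot]_M$ is the term condition commutator: for $\alpha,\beta,\mu\in\mathrm{Con}(M)$, $C(\alpha,\beta;\mu)$ means that for all $n,k$, every $(n+k)$-ary term $t$, all $(a_i,b_i)\in\alpha$ and $(c_j,d_j)\in\beta$: $(t(\bar a,\bar c),t(\bar a,\bar d))\in\mu$ iff $(t(\bar b,\bar c),t(\bar b,\bar d))\in\mu$; $[\alpha,\beta]_M=\bigcap\{\mu: C(\alpha,\beta;\mu)\}$. A congruence $\phi\neq\nabla_M$ is prime if $[\alpha,\beta]_M\subseteq\phi$ implies $\alpha\subseteq\phi$ or $\beta\subseteq\phi$; $\mathrm{Spec}(M)$ is the set of primes, $\mathrm{Min}(M)$ its minimal elements; $\rho_M(\theta)$ is the intersection of all primes containing $\theta$ ($\nabla_M$ if none); $M$ is semiprime if $\rho_M(\Delta_M)=\Delta_M$. Standing assumptions: $B$ is an algebra, $A$ is a subalgebra of $B$, $A$ and $B$ are semiprime, and the commutators of $A$ and $B$ are commutative and distributive w.r.t. arbitrary joins (i.e. $[\alpha,\beta]=[\beta,\alpha]$ and $[\bigvee_i\alpha_i,\beta]=\bigvee_i[\alpha_i,\beta]$). The extension $A\subseteq B$ is admissible iff $\phi\cap\nabla_A\in\mathrm{Spec}(A)$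 for all $\phi\in\mathrm{Spec}(B)$. *)

theory Defs
  imports Main
begin

text \<open>Algebras of a fixed signature: operation symbols of type 'f with arity ar,
  interpreted by F (the same interpretation for B and its subalgebra A).\<close>

definition is_algebra :: "('f \<Rightarrow> nat) \<Rightarrow> ('f \<Rightarrow> 'a list \<Rightarrow> 'a) \<Rightarrow> 'a set \<Rightarrow> bool" where
  "is_algebra ar F S \<longleftrightarrow>
     (\<forall>f xs. length xs = ar f \<and> set xs \<subseteq> S \<longrightarrow> F f xs \<in> S)"

definition subalgebra :: "('f \<Rightarrow> nat) \<Rightarrow> ('f \<Rightarrow> 'a list \<Rightarrow> 'a) \<Rightarrow> 'a set \<Rightarrow> 'a set \<Rightarrow> bool" where
  "subalgebra ar F A B \<longleftrightarrow> A \<subseteq> B \<and> is_algebra ar F A"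

definition Con :: "('f \<Rightarrow> nat) \<Rightarrow> ('f \<Rightarrow> 'a list \<Rightarrow> 'a) \<Rightarrow> 'a set \<Rightarrow> ('a \<times> 'a) set set" where
  "Con ar F S = {\<theta>. \<theta> \<subseteq> S \<times> S \<and> refl_on S \<theta> \<and> sym \<theta> \<and> trans \<theta> \<and>
     (\<forall>f xs ys. length xs = ar f \<and> length ys = ar f \<and>
        (\<forall>i < ar f. (xs ! i, ys ! i) \<in> \<theta>) \<longrightarrow> (F f xs, F f ys) \<in> \<theta>)}"

datatype 'f trm = Var nat | App 'f "'f trm list"

fun wf_trm :: "('f \<Rightarrow> nat) \<Rightarrow> 'f trm \<Rightarrow> bool" where
  "wf_trm ar (Var i) = True"
| "wf_trm ar (App f ts) = (length ts = ar f \<and> (\<forall>t \<in> set ts. wf_trm ar t))"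

fun vars_trm :: "'f trm \<Rightarrow> nat set" where
  "vars_trm (Var i) = {i}"
| "vars_trm (App f ts) = (\<Union>t \<in> set ts. vars_trm t)"

fun eval_trm :: "('f \<Rightarrow> 'a list \<Rightarrow> 'a) \<Rightarrow> (nat \<Rightarrow> 'a) \<Rightarrow> 'f trm \<Rightarrow> 'a" where
  "eval_trm F \<sigma> (Var i) = \<sigma> i"
| "eval_trm F \<sigma> (App f ts) = F f (map (eval_trm F \<sigma>) ts)"

text \<open>Term condition C(alpha, beta; mu): for every (n+k)-ary term t (variables among
  0..n+k-1, the first n receiving the a/b tuple, the last k the c/d tuple).\<close>
definition TC :: "('f \<Rightarrow> nat) \<Rightarrow> ('f \<Rightarrow> 'a list \<Rightarrow> 'a) \<Rightarrow> 'a set \<Rightarrow>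
    ('a \<times> 'a) set \<Rightarrow> ('a \<times> 'a) set \<Rightarrow> ('a \<times> 'a) set \<Rightarrow> bool" where
  "TC ar F S \<alpha> \<beta> \<mu> \<longleftrightarrow>
    (\<forall>n k t a b c d.
       wf_trm ar t \<and> vars_trm t \<subseteq> {..<n+k} \<and>
       (\<forall>i<n. (a i, b i) \<in> \<alpha>) \<and> (\<forall>j<k. (c j, d j) \<in> \<beta>) \<longrightarrow>
       (let ev = (\<lambda>x y. eval_trm F (\<lambda>i. if i < n then x i else y (i - n)) t) in
         ((ev a c, ev a d) \<in> \<mu> \<longleftrightarrow> (ev b c, ev b d) \<in> \<mu>)))"

definition comm :: "('f \<Rightarrow> nat) \<Rightarrow> ('f \<Rightarrow> 'a list \<Rightarrow> 'a) \<Rightarrow> 'a set \<Rightarrow>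
    ('a \<times> 'a) set \<Rightarrow> ('a \<times> 'a) set \<Rightarrow> ('a \<times> 'a) set" where
  "comm ar F S \<alpha> \<beta> = \<Inter>{\<mu> \<in> Con ar F S. TC ar F S \<alpha> \<beta> \<mu>}"

definition Con_Sup :: "('f \<Rightarrow> nat) \<Rightarrow> ('f \<Rightarrow> 'a list \<Rightarrow> 'a) \<Rightarrow> 'a set \<Rightarrow>
    ('a \<times> 'a) set set \<Rightarrow> ('a \<times> 'a) set" where
  "Con_Sup ar F S X = \<Inter>{\<theta> \<in> Con ar F S. \<Union>X \<subseteq> \<theta>}"

definition comm_commutative :: "('f \<Rightarrow> nat) \<Rightarrow> ('f \<Rightarrow> 'a list \<Rightarrow> 'a) \<Rightarrow> 'a set \<Rightarrow> bool" where
  "comm_commutative ar F S \<longleftrightarrow>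
    (\<forall>\<alpha> \<in> Con ar F S. \<forall>\<beta> \<in> Con ar F S. comm ar F S \<alpha> \<beta> = comm ar F S \<beta> \<alpha>)"

definition comm_join_distributive :: "('f \<Rightarrow> nat) \<Rightarrow> ('f \<Rightarrow> 'a list \<Rightarrow> 'a) \<Rightarrow> 'a set \<Rightarrow> bool" where
  "comm_join_distributive ar F S \<longleftrightarrow>
    (\<forall>X \<subseteq> Con ar F S. \<forall>\<beta> \<in> Con ar F S.
       comm ar F S (Con_Sup ar F S X) \<beta> = Con_Sup ar F S ((\<lambda>\<alpha>. comm ar F S \<alpha> \<beta>) ` X))"

definition prime_con :: "('f \<Rightarrow> nat) \<Rightarrow> ('f \<Rightarrow> 'a list \<Rightarrow> 'a) \<Rightarrow> 'a set \<Rightarrow> ('a \<times> 'a) set \<Rightarrow> bool" where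
  "prime_con ar F S \<phi> \<longleftrightarrow> \<phi> \<in> Con ar F S \<and> \<phi> \<noteq> S \<times> S \<and>
    (\<forall>\<alpha> \<in> Con ar F S. \<forall>\<beta> \<in> Con ar F S.
       comm ar F S \<alpha> \<beta> \<subseteq> \<phi> \<longrightarrow> \<alpha> \<subseteq> \<phi> \<or> \<beta> \<subseteq> \<phi>)"

definition Spec :: "('f \<Rightarrow> nat) \<Rightarrow> ('f \<Rightarrow> 'a list \<Rightarrow> 'a) \<Rightarrow> 'a set \<Rightarrow> ('a \<times> 'a) set set" where
  "Spec ar F S = {\<phi>. prime_con ar F S \<phi>}"

definition Min_Spec :: "('f \<Rightarrow> nat) \<Rightarrow> ('f \<Rightarrow> 'a list \<Rightarrow> 'a) \<Rightarrow> 'a set \<Rightarrow> ('a \<times> 'a) set set" where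
  "Min_Spec ar F S = {\<phi> \<in> Spec ar F S. \<forall>\<psi> \<in> Spec ar F S. \<psi> \<subseteq> \<phi> \<longrightarrow> \<psi> = \<phi>}"

definition rad :: "('f \<Rightarrow> nat) \<Rightarrow> ('f \<Rightarrow> 'a list \<Rightarrow> 'a) \<Rightarrow> 'a set \<Rightarrow> ('a \<times> 'a) set \<Rightarrow> ('a \<times> 'a) set" where
  "rad ar F S \<theta> = (if {\<phi> \<in> Spec ar F S. \<theta> \<subseteq> \<phi>} = {} then S \<times> S
                     else \<Inter>{\<phi> \<in> Spec ar F S. \<theta> \<subseteq> \<phi>})"

definition semiprime :: "('f \<Rightarrow> nat) \<Rightarrow> ('f \<Rightarrow> 'a list \<Rightarrow> 'a) \<Rightarrow> 'a set \<Rightarrow> bool" where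
  "semiprime ar F S \<longleftrightarrow> rad ar F S (Id_on S) = Id_on S"

definition admissible :: "('f \<Rightarrow> nat) \<Rightarrow> ('f \<Rightarrow> 'a list \<Rightarrow> 'a) \<Rightarrow> 'a set \<Rightarrow> 'a set \<Rightarrow> bool" where
  "admissible ar F A B \<longleftrightarrow> (\<forall>\<phi> \<in> Spec ar F B. \<phi> \<inter> (A \<times> A) \<in> Spec ar F A)"

end

theory Submission
  imports Defs
begin

lemma ConI:
  assumes "\<theta> \<subseteq> S \<times> S" "refl_on S \<theta>" "sym \<theta>" "trans \<theta>"
    "\<And>f xs ys. length xs = ar f \<Longrightarrow> length ys = ar f \<Longrightarrow>
        (\<forall>i < ar f. (xs ! i, ys ! i) \<in> \<theta>) \<Longrightarrow> (F f xs, F f ys) \<in> \<theta>"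
  shows "\<theta> \<in> Con ar F S"
  using assms unfolding Con_def by blast

lemma ConD:
  assumes "\<theta> \<in> Con ar F S"
  shows "\<theta> \<subseteq> S \<times> S" "refl_on S \<theta>" "sym \<theta>" "trans \<theta>"
    "\<And>f xs ys. length xs = ar f \<Longrightarrow> length ys = ar f \<Longrightarrow>
        (\<forall>i < ar f. (xs ! i, ys ! i) \<in> \<theta>) \<Longrightarrow> (F f xs, F f ys) \<in> \<theta>"
  using assms unfolding Con_def by blast+

lemma Con_refl: "\<theta> \<in> Con ar F S \<Longrightarrow> z \<in> S \<Longrightarrow> (z, z) \<in> \<theta>"
  using ConD(2) unfolding refl_on_def by blast

lemma eval_closed:
  assumes "is_algebra ar F S"
  shows "wf_trm ar t \<Longrightarrow> (\<forall>i\<in>vars_trm t. \<sigma> i \<in> S) \<Longrightarrow> eval_trm F \<sigma> t \<in> S"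
proof (induction t)
  case (Var x) thus ?case by simp
next
  case (App f ts)
  have "set (map (eval_trm F \<sigma>) ts) \<subseteq> S" using App by auto
  moreover have "length (map (eval_trm F \<sigma>) ts) = ar f" using App.prems by simp
  ultimately show ?case using assms unfolding is_algebra_def by simp
qed

lemma eval_cong:
  assumes "\<theta> \<in> Con ar F S"
  shows "wf_trm ar t \<Longrightarrow> (\<forall>i\<in>vars_trm t. (\<sigma> i, \<tau> i) \<in> \<theta>) \<Longrightarrow>
     (eval_trm F \<sigma> t, eval_trm F \<tau> t) \<in> \<theta>"
proof (induction t)
  case (Var x) thus ?case by simp
next
  case (App f ts)
  have comp: "\<And>xs ys. length xs = ar f \<Longrightarrow> length ys = ar f \<Longrightarrow>
        (\<forall>i < ar f. (xs ! i, ys ! i) \<in> \<theta>) \<Longrightarrow> (F f xs, F f ys) \<in> \<theta>"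
    using assms unfolding Con_def by blast
  have len: "length ts = ar f" using App.prems by simp
  have "\<forall>i < ar f. (map (eval_trm F \<sigma>) ts ! i, map (eval_trm F \<tau>) ts ! i) \<in> \<theta>"
  proof (intro allI impI)
    fix i assume i: "i < ar f"
    hence m: "ts ! i \<in> set ts" using len by simp
    have "(eval_trm F \<sigma> (ts ! i), eval_trm F \<tau> (ts ! i)) \<in> \<theta>"
      using App.IH[OF m] App.prems m by auto
    thus "(map (eval_trm F \<sigma>) ts ! i, map (eval_trm F \<tau>) ts ! i) \<in> \<theta>" using i len by simp
  qed
  thus ?case using comp len by simp
qed

lemma Con_Inter:
  assumes "X \<noteq> {}" "X \<subseteq> Con ar F S"
  shows "\<Inter>X \<in> Con ar F S"
proof (rule ConI)
  obtain x where x: "x \<in> X" using assms by auto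
  have C: "\<And>\<theta>. \<theta> \<in> X \<Longrightarrow> \<theta> \<in> Con ar F S" using assms by auto
  show "\<Inter>X \<subseteq> S \<times> S" using x ConD(1)[OF C[OF x]] by blast
  show "refl_on S (\<Inter>X)"
    using x ConD(1)[OF C[OF x]] Con_refl[OF C] unfolding refl_on_def by blast
  show "sym (\<Inter>X)"
  proof (rule symI)
    fix a b assume "(a, b) \<in> \<Inter>X"
    thus "(b, a) \<in> \<Inter>X" using ConD(3)[OF C] by (meson InterD InterI symD)
  qed
  show "trans (\<Inter>X)"
  proof (rule transI)
    fix a b c assume "(a, b) \<in> \<Inter>X" "(b, c) \<in> \<Inter>X"
    thus "(a, c) \<in> \<Inter>X" using ConD(4)[OF C] by (meson InterD InterI transD)
  qed
  fix f xs ys assume h: "length xs = ar f" "length ys = ar f" "\<forall>i < ar f. (xs ! i, ys ! i) \<in> \<Inter>X"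
  show "(F f xs, F f ys) \<in> \<Inter>X"
  proof
    fix \<theta> assume t: "\<theta> \<in> X"
    have "\<forall>i < ar f. (xs ! i, ys ! i) \<in> \<theta>" using h(3) t by blast
    thus "(F f xs, F f ys) \<in> \<theta>" using ConD(5)[OF C[OF t] h(1,2)] by blast
  qed
qed

lemma Con_Union_chain:
  assumes "X \<noteq> {}" "X \<subseteq> Con ar F S" "\<forall>a\<in>X. \<forall>b\<in>X. a \<subseteq> b \<or> b \<subseteq> a"
  shows "\<Union>X \<in> Con ar F S"
proof (rule ConI)
  obtain x where x: "x \<in> X" using assms by auto
  have C: "\<And>\<theta>. \<theta> \<in> X \<Longrightarrow> \<theta> \<in> Con ar F S" using assms by auto
  show "\<Union>X \<subseteq> S \<times> S" using ConD(1)[OF C] by blast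
  show "refl_on S (\<Union>X)"
    using ConD(1)[OF C] Con_refl[OF C[OF x]] x unfolding refl_on_def by blast
  show "sym (\<Union>X)"
  proof (rule symI)
    fix a b assume "(a, b) \<in> \<Union>X"
    thus "(b, a) \<in> \<Union>X" using ConD(3)[OF C] by (meson UnionE UnionI symD)
  qed
  show "trans (\<Union>X)"
  proof (rule transI)
    fix a b c assume "(a, b) \<in> \<Union>X" "(b, c) \<in> \<Union>X"
    then obtain p q where p: "p \<in> X" "(a,b) \<in> p" and q: "q \<in> X" "(b,c) \<in> q" by auto
    show "(a, c) \<in> \<Union>X"
    proof (cases "p \<subseteq> q")
      case True
      hence "trans q" using ConD(4)[OF C[OF q(1)]] by blast
      thus ?thesis using True p q by (meson UnionI subsetD transD)
    next
      case False
      hence "q \<subseteq> p" using p q assms(3) by blast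
      moreover have "trans p" using ConD(4)[OF C[OF p(1)]] by blast
      ultimately show ?thesis using p q by (meson UnionI subsetD transD)
    qed
  qed
  fix f xs ys assume h: "length xs = ar f" "length ys = ar f" "\<forall>i < ar f. (xs ! i, ys ! i) \<in> \<Union>X"
  have fin: "finite {..<ar f}" by simp
  have "\<forall>I. I \<subseteq> {..<ar f} \<longrightarrow> (\<exists>m\<in>X. \<forall>i \<in> I. (xs ! i, ys ! i) \<in> m)"
  proof (intro allI impI)
    fix I assume "I \<subseteq> {..<ar f}"
    hence "finite I" using finite_subset fin by blast
    thus "\<exists>m\<in>X. \<forall>i \<in> I. (xs ! i, ys ! i) \<in> m" using \<open>I \<subseteq> {..<ar f}\<close>
    proof (induction I rule: finite_induct)
      case empty thus ?case using x by blast
    next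
      case (insert j I)
      then obtain m where m: "m \<in> X" "\<forall>i \<in> I. (xs ! i, ys ! i) \<in> m" by auto
      have "j < ar f" using insert.prems by auto
      then obtain m' where m': "m' \<in> X" "(xs ! j, ys ! j) \<in> m'" using h(3) by blast
      show ?case
      proof (cases "m \<subseteq> m'")
        case True thus ?thesis using m m' by blast
      next
        case False hence "m' \<subseteq> m" using m m' assms(3) by blast
        thus ?thesis using m m' by blast
      qed
    qed
  qed
  then obtain m where m: "m \<in> X" "\<forall>i \<in> {..<ar f}. (xs ! i, ys ! i) \<in> m" by blast
  have "(F f xs, F f ys) \<in> m" using ConD(5)[OF C[OF m(1)] h(1,2)] m(2) by simp
  thus "(F f xs, F f ys) \<in> \<Union>X" using m by blast
qed

lemma comm_sub_left:
  assumes "\<alpha> \<in> Con ar F S" "\<beta> \<in> Con ar F S"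
  shows "comm ar F S \<alpha> \<beta> \<subseteq> \<alpha>"
proof -
  have "TC ar F S \<alpha> \<beta> \<alpha>"
    unfolding TC_def
  proof (intro allI impI)
    fix n k t a b c d
    assume h: "wf_trm ar t \<and> vars_trm t \<subseteq> {..<n+k} \<and> (\<forall>i<n. (a i, b i) \<in> \<alpha>) \<and> (\<forall>j<k. (c j, d j) \<in> \<beta>)"
    define ev where "ev = (\<lambda>x y. eval_trm F (\<lambda>i. if i < n then x i else y (i - n)) t)"
    have inS: "\<And>j. j < k \<Longrightarrow> c j \<in> S \<and> d j \<in> S" using h ConD(1)[OF assms(2)] by blast
    have reflS: "\<And>z. z \<in> S \<Longrightarrow> (z, z) \<in> \<alpha>" using Con_refl[OF assms(1)] by blast
    have key: "\<And>y. (\<forall>j<k. y j \<in> S) \<Longrightarrow> (ev a y, ev b y) \<in> \<alpha>"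
    proof -
      fix y assume y: "\<forall>j<k. y j \<in> S"
      show "(ev a y, ev b y) \<in> \<alpha>" unfolding ev_def
      proof (rule eval_cong[OF assms(1)])
        show "wf_trm ar t" using h by simp
        show "\<forall>i\<in>vars_trm t. ((if i < n then a i else y (i - n)), (if i < n then b i else y (i - n))) \<in> \<alpha>"
        proof
          fix i assume "i \<in> vars_trm t"
          hence i: "i < n + k" using h by auto
          show "((if i < n then a i else y (i - n)), (if i < n then b i else y (i - n))) \<in> \<alpha>"
          proof (cases "i < n")
            case True thus ?thesis using h by simp
          next
            case False hence "i - n < k" using i by simp
            thus ?thesis using False y reflS by simp
          qed
        qed
      qed
    qed
    have k1: "(ev a c, ev b c) \<in> \<alpha>" using key inS by auto
    have k2: "(ev a d, ev b d) \<in> \<alpha>" using key inS by auto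
    have sy: "sym \<alpha>" and tr: "trans \<alpha>" using ConD(3,4)[OF assms(1)] by auto
    have "(ev a c, ev a d) \<in> \<alpha> \<longleftrightarrow> (ev b c, ev b d) \<in> \<alpha>"
      using k1 k2 sy tr by (meson symD transD)
    thus "let ev = (\<lambda>x y. eval_trm F (\<lambda>i. if i < n then x i else y (i - n)) t) in
         ((ev a c, ev a d) \<in> \<alpha> \<longleftrightarrow> (ev b c, ev b d) \<in> \<alpha>)" unfolding ev_def Let_def .
  qed
  thus ?thesis unfolding comm_def using assms(1) by blast
qed

lemma Con_restrict:
  assumes "subalgebra ar F A B" "\<mu> \<in> Con ar F B"
  shows "\<mu> \<inter> (A \<times> A) \<in> Con ar F A"
proof (rule ConI)
  have sub: "A \<subseteq> B" and alg: "is_algebra ar F A" using assms(1) unfolding subalgebra_def by auto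
  show "\<mu> \<inter> (A \<times> A) \<subseteq> A \<times> A" by blast
  show "refl_on A (\<mu> \<inter> (A \<times> A))" using Con_refl[OF assms(2)] sub unfolding refl_on_def by blast
  show "sym (\<mu> \<inter> (A \<times> A))" using ConD(3)[OF assms(2)] unfolding sym_def by blast
  show "trans (\<mu> \<inter> (A \<times> A))" using ConD(4)[OF assms(2)] unfolding trans_def by blast
  fix f xs ys assume h: "length xs = ar f" "length ys = ar f" "\<forall>i < ar f. (xs ! i, ys ! i) \<in> \<mu> \<inter> (A \<times> A)"
  have "set xs \<subseteq> A" using h by (auto simp: in_set_conv_nth)
  moreover have "set ys \<subseteq> A" using h by (auto simp: in_set_conv_nth)
  ultimately have "F f xs \<in> A" "F f ys \<in> A" using alg h unfolding is_algebra_def by auto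
  moreover have "(F f xs, F f ys) \<in> \<mu>" using ConD(5)[OF assms(2) h(1,2)] h(3) by blast
  ultimately show "(F f xs, F f ys) \<in> \<mu> \<inter> (A \<times> A)" by blast
qed

lemma full_Con:
  assumes "is_algebra ar F A"
  shows "A \<times> A \<in> Con ar F A"
proof (rule ConI)
  show "A \<times> A \<subseteq> A \<times> A" by simp
  show "refl_on A (A \<times> A)" unfolding refl_on_def by blast
  show "sym (A \<times> A)" unfolding sym_def by blast
  show "trans (A \<times> A)" unfolding trans_def by blast
  fix f xs ys assume h: "length xs = ar f" "length ys = ar f" "\<forall>i < ar f. (xs ! i, ys ! i) \<in> A \<times> A"
  have "set xs \<subseteq> A" using h by (auto simp: in_set_conv_nth)
  moreover have "set ys \<subseteq> A" using h by (auto simp: in_set_conv_nth)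
  ultimately show "(F f xs, F f ys) \<in> A \<times> A" using assms h unfolding is_algebra_def by auto
qed

lemma Id_Con:
  assumes "is_algebra ar F A"
  shows "Id_on A \<in> Con ar F A"
proof (rule ConI)
  show "Id_on A \<subseteq> A \<times> A" by blast
  show "refl_on A (Id_on A)" unfolding refl_on_def by blast
  show "sym (Id_on A)" unfolding sym_def by blast
  show "trans (Id_on A)" unfolding trans_def by blast
  fix f xs ys assume h: "length xs = ar f" "length ys = ar f" "\<forall>i < ar f. (xs ! i, ys ! i) \<in> Id_on A"
  have "xs = ys" using h by (intro nth_equalityI) (auto simp: Id_on_def)
  moreover have "set xs \<subseteq> A" using h by (auto simp: in_set_conv_nth)
  ultimately show "(F f xs, F f ys) \<in> Id_on A" using assms h unfolding is_algebra_def by auto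
qed

lemma TC_restrict:
  assumes "subalgebra ar F A B" "TC ar F B \<alpha> \<beta> \<mu>"
  shows "TC ar F A (\<alpha> \<inter> (A \<times> A)) (\<beta> \<inter> (A \<times> A)) (\<mu> \<inter> (A \<times> A))"
  unfolding TC_def
proof (intro allI impI)
  fix n k t a b c d
  assume h: "wf_trm ar t \<and> vars_trm t \<subseteq> {..<n+k} \<and> (\<forall>i<n. (a i, b i) \<in> \<alpha> \<inter> (A \<times> A)) \<and> (\<forall>j<k. (c j, d j) \<in> \<beta> \<inter> (A \<times> A))"
  have alg: "is_algebra ar F A" using assms(1) unfolding subalgebra_def by auto
  define ev where "ev = (\<lambda>x y. eval_trm F (\<lambda>i. if i < n then x i else y (i - n)) t)"
  have cl: "\<And>x y. (\<forall>i<n. x i \<in> A) \<Longrightarrow> (\<forall>j<k. y j \<in> A) \<Longrightarrow> ev x y \<in> A"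
  proof -
    fix x y assume x: "\<forall>i<n. x i \<in> A" and y: "\<forall>j<k. y j \<in> A"
    show "ev x y \<in> A" unfolding ev_def
    proof (rule eval_closed[OF alg])
      show "wf_trm ar t" using h by simp
      show "\<forall>i\<in>vars_trm t. (if i < n then x i else y (i - n)) \<in> A"
      proof
        fix i assume "i \<in> vars_trm t"
        hence i: "i < n + k" using h by auto
        show "(if i < n then x i else y (i - n)) \<in> A"
        proof (cases "i < n")
          case True thus ?thesis using x by simp
        next
          case False hence "i - n < k" using i by simp
          thus ?thesis using False y by simp
        qed
      qed
    qed
  qed
  have xa: "\<forall>i<n. a i \<in> A" "\<forall>i<n. b i \<in> A" "\<forall>j<k. c j \<in> A" "\<forall>j<k. d j \<in> A" using h by blast+
  have inA: "ev a c \<in> A" "ev a d \<in> A" "ev b c \<in> A" "ev b d \<in> A"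
    using cl xa by blast+
  have hB: "wf_trm ar t \<and> vars_trm t \<subseteq> {..<n+k} \<and> (\<forall>i<n. (a i, b i) \<in> \<alpha>) \<and> (\<forall>j<k. (c j, d j) \<in> \<beta>)"
    using h by blast
  have "(ev a c, ev a d) \<in> \<mu> \<longleftrightarrow> (ev b c, ev b d) \<in> \<mu>"
    using assms(2) hB unfolding TC_def ev_def Let_def by blast
  thus "let ev = (\<lambda>x y. eval_trm F (\<lambda>i. if i < n then x i else y (i - n)) t) in
         ((ev a c, ev a d) \<in> \<mu> \<inter> (A \<times> A) \<longleftrightarrow> (ev b c, ev b d) \<in> \<mu> \<inter> (A \<times> A))"
    using inA unfolding ev_def Let_def by blast
qed

lemma TC_full:
  assumes "is_algebra ar F A" "\<alpha> \<subseteq> A \<times> A" "\<beta> \<subseteq> A \<times> A"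
  shows "TC ar F A \<alpha> \<beta> (A \<times> A)"
  unfolding TC_def
proof (intro allI impI)
  fix n k t a b c d
  assume h: "wf_trm ar t \<and> vars_trm t \<subseteq> {..<n+k} \<and> (\<forall>i<n. (a i, b i) \<in> \<alpha>) \<and> (\<forall>j<k. (c j, d j) \<in> \<beta>)"
  define ev where "ev = (\<lambda>x y. eval_trm F (\<lambda>i. if i < n then x i else y (i - n)) t)"
  have cl: "\<And>x y. (\<forall>i<n. x i \<in> A) \<Longrightarrow> (\<forall>j<k. y j \<in> A) \<Longrightarrow> ev x y \<in> A"
  proof -
    fix x y assume x: "\<forall>i<n. x i \<in> A" and y: "\<forall>j<k. y j \<in> A"
    show "ev x y \<in> A" unfolding ev_def
    proof (rule eval_closed[OF assms(1)])
      show "wf_trm ar t" using h by simp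
      show "\<forall>i\<in>vars_trm t. (if i < n then x i else y (i - n)) \<in> A"
      proof
        fix i assume "i \<in> vars_trm t"
        hence i: "i < n + k" using h by auto
        show "(if i < n then x i else y (i - n)) \<in> A"
        proof (cases "i < n")
          case True thus ?thesis using x by simp
        next
          case False hence "i - n < k" using i by simp
          thus ?thesis using False y by simp
        qed
      qed
    qed
  qed
  have xa: "\<forall>i<n. a i \<in> A" "\<forall>i<n. b i \<in> A" "\<forall>j<k. c j \<in> A" "\<forall>j<k. d j \<in> A" using h assms(2,3) by blast+
  have inA: "ev a c \<in> A" "ev a d \<in> A" "ev b c \<in> A" "ev b d \<in> A"
    using cl xa by blast+
  thus "let ev = (\<lambda>x y. eval_trm F (\<lambda>i. if i < n then x i else y (i - n)) t) in
         ((ev a c, ev a d) \<in> A \<times> A \<longleftrightarrow> (ev b c, ev b d) \<in> A \<times> A)"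
    unfolding ev_def Let_def by blast
qed

lemma comm_restrict:
  assumes "subalgebra ar F A B"
  shows "comm ar F A (\<alpha> \<inter> (A \<times> A)) (\<beta> \<inter> (A \<times> A)) \<subseteq> comm ar F B \<alpha> \<beta> \<inter> (A \<times> A)"
proof
  fix x assume x: "x \<in> comm ar F A (\<alpha> \<inter> (A \<times> A)) (\<beta> \<inter> (A \<times> A))"
  have alg: "is_algebra ar F A" using assms(1) unfolding subalgebra_def by auto
  have "TC ar F A (\<alpha> \<inter> (A \<times> A)) (\<beta> \<inter> (A \<times> A)) (A \<times> A)"
    by (rule TC_full[OF alg]) auto
  hence "A \<times> A \<in> {\<mu> \<in> Con ar F A. TC ar F A (\<alpha> \<inter> (A \<times> A)) (\<beta> \<inter> (A \<times> A)) \<mu>}"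
    using full_Con[OF alg] by blast
  hence xA: "x \<in> A \<times> A" using x unfolding comm_def by blast
  have "x \<in> comm ar F B \<alpha> \<beta>" unfolding comm_def
  proof
    fix \<mu> assume m: "\<mu> \<in> {\<mu> \<in> Con ar F B. TC ar F B \<alpha> \<beta> \<mu>}"
    have "\<mu> \<inter> (A \<times> A) \<in> {\<mu> \<in> Con ar F A. TC ar F A (\<alpha> \<inter> (A \<times> A)) (\<beta> \<inter> (A \<times> A)) \<mu>}"
      using Con_restrict[OF assms(1)] TC_restrict[OF assms(1)] m by blast
    thus "x \<in> \<mu>" using x unfolding comm_def by blast
  qed
  thus "x \<in> comm ar F B \<alpha> \<beta> \<inter> (A \<times> A)" using xA by blast
qed

lemma Con_Sup_le:
  assumes "\<theta> \<in> Con ar F S" "\<Union>X \<subseteq> \<theta>"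
  shows "Con_Sup ar F S X \<subseteq> \<theta>"
  using assms unfolding Con_Sup_def by blast

lemma Con_Sup_Con:
  assumes "is_algebra ar F S" "X \<subseteq> Con ar F S"
  shows "Con_Sup ar F S X \<in> Con ar F S" "\<Union>X \<subseteq> Con_Sup ar F S X"
proof -
  have "\<Union>X \<subseteq> S \<times> S" using assms(2) ConD(1) by blast
  hence "S \<times> S \<in> {\<theta> \<in> Con ar F S. \<Union>X \<subseteq> \<theta>}"
    using full_Con[OF assms(1)] by blast
  thus "Con_Sup ar F S X \<in> Con ar F S" unfolding Con_Sup_def
    by (intro Con_Inter) auto
  show "\<Union>X \<subseteq> Con_Sup ar F S X" unfolding Con_Sup_def by blast
qed

lemma exists_prime_below:
  assumes algB: "is_algebra ar F B" and sa: "subalgebra ar F A B"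
    and cc: "comm_commutative ar F B" and cd: "comm_join_distributive ar F B"
    and psi: "prime_con ar F A \<psi>"
  shows "\<exists>\<theta>. prime_con ar F B \<theta> \<and> \<theta> \<inter> (A \<times> A) \<subseteq> \<psi>"
proof -
  have sub: "A \<subseteq> B" and algA: "is_algebra ar F A" using sa unfolding subalgebra_def by auto
  have psiC: "\<psi> \<in> Con ar F A" and psiN: "\<psi> \<noteq> A \<times> A"
    and psiP: "\<And>\<alpha> \<beta>. \<alpha> \<in> Con ar F A \<Longrightarrow> \<beta> \<in> Con ar F A \<Longrightarrow> comm ar F A \<alpha> \<beta> \<subseteq> \<psi> \<Longrightarrow> \<alpha> \<subseteq> \<psi> \<or> \<beta> \<subseteq> \<psi>"
    using psi unfolding prime_con_def by blast+
  define P where "P = {\<theta> \<in> Con ar F B. \<theta> \<inter> (A \<times> A) \<subseteq> \<psi>}"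
  have IdP: "Id_on B \<in> P"
    unfolding P_def using Id_Con[OF algB] Con_refl[OF psiC] by (auto simp: Id_on_def)
  have "\<exists>m \<in> P. \<forall>a \<in> P. m \<subseteq> a \<longrightarrow> a = m"
  proof (rule predicate_Zorn)
    show "partial_order_on P (relation_of (\<subseteq>) P)"
      by (rule partial_order_on_relation_ofI) auto
    fix C assume C: "C \<in> Chains (relation_of (\<subseteq>) P)"
    have CP: "C \<subseteq> P" using Chains_relation_of[OF C] .
    have ch: "\<forall>a\<in>C. \<forall>b\<in>C. a \<subseteq> b \<or> b \<subseteq> a" using C unfolding Chains_def relation_of_def by blast
    show "\<exists>u \<in> P. \<forall>a \<in> C. a \<subseteq> u"
    proof (cases "C = {}")
      case True thus ?thesis using IdP by blast
    next
      case False
      have "\<Union>C \<in> Con ar F B" using Con_Union_chain[OF False _ ch] CP unfolding P_def by blast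
      moreover have "\<Union>C \<inter> (A \<times> A) \<subseteq> \<psi>" using CP unfolding P_def by blast
      ultimately show ?thesis unfolding P_def by blast
    qed
  qed
  then obtain \<theta> where thP: "\<theta> \<in> P" and thM: "\<And>a. a \<in> P \<Longrightarrow> \<theta> \<subseteq> a \<Longrightarrow> a = \<theta>" by blast
  have thC: "\<theta> \<in> Con ar F B" and thA: "\<theta> \<inter> (A \<times> A) \<subseteq> \<psi>" using thP unfolding P_def by auto
  have "prime_con ar F B \<theta>"
    unfolding prime_con_def
  proof (intro conjI ballI impI)
    show "\<theta> \<in> Con ar F B" by fact
    show "\<theta> \<noteq> B \<times> B"
    proof
      assume "\<theta> = B \<times> B"
      hence "A \<times> A \<subseteq> \<psi>" using thA sub by blast
      thus False using psiN ConD(1)[OF psiC] by blast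
    qed
    fix \<alpha> \<beta> assume aC: "\<alpha> \<in> Con ar F B" and bC: "\<beta> \<in> Con ar F B"
      and cm: "comm ar F B \<alpha> \<beta> \<subseteq> \<theta>"
    show "\<alpha> \<subseteq> \<theta> \<or> \<beta> \<subseteq> \<theta>"
    proof (rule ccontr)
      assume nn: "\<not> (\<alpha> \<subseteq> \<theta> \<or> \<beta> \<subseteq> \<theta>)"
      define Ja where "Ja = Con_Sup ar F B {\<theta>, \<alpha>}"
      define Jb where "Jb = Con_Sup ar F B {\<theta>, \<beta>}"
      have Xa: "{\<theta>, \<alpha>} \<subseteq> Con ar F B" and Xb: "{\<theta>, \<beta>} \<subseteq> Con ar F B" using thC aC bC by auto
      have JaC: "Ja \<in> Con ar F B" and Ja1: "\<theta> \<subseteq> Ja" and Ja2: "\<alpha> \<subseteq> Ja"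
        using Con_Sup_Con[OF algB Xa] unfolding Ja_def by auto
      have JbC: "Jb \<in> Con ar F B" and Jb1: "\<theta> \<subseteq> Jb" and Jb2: "\<beta> \<subseteq> Jb"
        using Con_Sup_Con[OF algB Xb] unfolding Jb_def by auto
      have naP: "\<not> Ja \<inter> (A \<times> A) \<subseteq> \<psi>"
      proof
        assume "Ja \<inter> (A \<times> A) \<subseteq> \<psi>"
        hence "Ja \<in> P" using JaC unfolding P_def by blast
        hence "Ja = \<theta>" using thM Ja1 by blast
        thus False using nn Ja2 by blast
      qed
      have nbP: "\<not> Jb \<inter> (A \<times> A) \<subseteq> \<psi>"
      proof
        assume "Jb \<inter> (A \<times> A) \<subseteq> \<psi>"
        hence "Jb \<in> P" using JbC unfolding P_def by blast
        hence "Jb = \<theta>" using thM Jb1 by blast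
        thus False using nn Jb2 by blast
      qed
      have dist: "\<And>X \<gamma>. X \<subseteq> Con ar F B \<Longrightarrow> \<gamma> \<in> Con ar F B \<Longrightarrow>
          comm ar F B (Con_Sup ar F B X) \<gamma> = Con_Sup ar F B ((\<lambda>\<alpha>. comm ar F B \<alpha> \<gamma>) ` X)"
        using cd unfolding comm_join_distributive_def by blast
      have com: "\<And>x y. x \<in> Con ar F B \<Longrightarrow> y \<in> Con ar F B \<Longrightarrow> comm ar F B x y = comm ar F B y x"
        using cc unfolding comm_commutative_def by blast
      have s1: "comm ar F B \<alpha> Jb \<subseteq> \<theta>"
      proof -
        have "comm ar F B \<alpha> Jb = comm ar F B Jb \<alpha>" using com aC JbC by blast
        also have "\<dots> = Con_Sup ar F B {comm ar F B \<theta> \<alpha>, comm ar F B \<beta> \<alpha>}"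
          unfolding Jb_def using dist[OF Xb aC] by simp
        also have "\<dots> \<subseteq> \<theta>"
        proof (rule Con_Sup_le[OF thC])
          have "comm ar F B \<theta> \<alpha> \<subseteq> \<theta>" using comm_sub_left[OF thC aC] .
          moreover have "comm ar F B \<beta> \<alpha> \<subseteq> \<theta>" using com[OF bC aC] cm by simp
          ultimately show "\<Union>{comm ar F B \<theta> \<alpha>, comm ar F B \<beta> \<alpha>} \<subseteq> \<theta>" by blast
        qed
        finally show ?thesis .
      qed
      have s2: "comm ar F B Ja Jb \<subseteq> \<theta>"
      proof -
        have "comm ar F B Ja Jb = Con_Sup ar F B {comm ar F B \<theta> Jb, comm ar F B \<alpha> Jb}"
          unfolding Ja_def using dist[OF Xa JbC] by simp
        also have "\<dots> \<subseteq> \<theta>"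
        proof (rule Con_Sup_le[OF thC])
          have "comm ar F B \<theta> Jb \<subseteq> \<theta>" using comm_sub_left[OF thC JbC] .
          thus "\<Union>{comm ar F B \<theta> Jb, comm ar F B \<alpha> Jb} \<subseteq> \<theta>" using s1 by blast
        qed
        finally show ?thesis .
      qed
      have "comm ar F A (Ja \<inter> (A \<times> A)) (Jb \<inter> (A \<times> A)) \<subseteq> \<psi>"
        using comm_restrict[OF sa, of Ja Jb] s2 thA by blast
      hence "Ja \<inter> (A \<times> A) \<subseteq> \<psi> \<or> Jb \<inter> (A \<times> A) \<subseteq> \<psi>"
        using psiP Con_restrict[OF sa JaC] Con_restrict[OF sa JbC] by blast
      thus False using naP nbP by blast
    qed
  qed
  thus ?thesis using thA by blast
qed

lemma exists_min_below:
  assumes th: "prime_con ar F B \<theta>"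
  shows "\<exists>\<mu> \<in> Min_Spec ar F B. \<mu> \<subseteq> \<theta>"
proof -
  define Q where "Q = {\<phi> \<in> Spec ar F B. \<phi> \<subseteq> \<theta>}"
  have thQ: "\<theta> \<in> Q" unfolding Q_def Spec_def using th by blast
  have "\<exists>m \<in> Q. \<forall>a \<in> Q. (\<lambda>x y. y \<subseteq> x) m a \<longrightarrow> a = m"
  proof (rule predicate_Zorn)
    show "partial_order_on Q (relation_of (\<lambda>x y. y \<subseteq> x) Q)"
      by (rule partial_order_on_relation_ofI) auto
    fix C assume C: "C \<in> Chains (relation_of (\<lambda>x y. y \<subseteq> x) Q)"
    have CQ: "C \<subseteq> Q" using Chains_relation_of[OF C] .
    have ch: "\<forall>a\<in>C. \<forall>b\<in>C. a \<subseteq> b \<or> b \<subseteq> a" using C unfolding Chains_def relation_of_def by blast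
    show "\<exists>u \<in> Q. \<forall>a \<in> C. (\<lambda>x y. y \<subseteq> x) a u"
    proof (cases "C = {}")
      case True thus ?thesis using thQ by blast
    next
      case False
      then obtain x where x: "x \<in> C" by blast
      have Pr: "\<And>\<phi>. \<phi> \<in> C \<Longrightarrow> prime_con ar F B \<phi>" using CQ unfolding Q_def Spec_def by blast
      have "prime_con ar F B (\<Inter>C)"
        unfolding prime_con_def
      proof (intro conjI ballI impI)
        show "\<Inter>C \<in> Con ar F B" using Con_Inter[OF False] Pr unfolding prime_con_def by blast
        show "\<Inter>C \<noteq> B \<times> B"
        proof
          assume e: "\<Inter>C = B \<times> B"
          have "x \<in> Con ar F B" "x \<noteq> B \<times> B" using Pr[OF x] unfolding prime_con_def by blast+
          moreover have "B \<times> B \<subseteq> x" using e x by blast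
          ultimately show False using ConD(1) by blast
        qed
        fix \<alpha> \<beta> assume aC: "\<alpha> \<in> Con ar F B" and bC: "\<beta> \<in> Con ar F B"
          and cm: "comm ar F B \<alpha> \<beta> \<subseteq> \<Inter>C"
        show "\<alpha> \<subseteq> \<Inter>C \<or> \<beta> \<subseteq> \<Inter>C"
        proof (rule ccontr)
          assume "\<not> (\<alpha> \<subseteq> \<Inter>C \<or> \<beta> \<subseteq> \<Inter>C)"
          then obtain p q where p: "p \<in> C" "\<not> \<alpha> \<subseteq> p" and q: "q \<in> C" "\<not> \<beta> \<subseteq> q" by blast
          have pp: "\<alpha> \<subseteq> p \<or> \<beta> \<subseteq> p" using Pr[OF p(1)] aC bC cm p(1) unfolding prime_con_def by blast
          have qq: "\<alpha> \<subseteq> q \<or> \<beta> \<subseteq> q" using Pr[OF q(1)] aC bC cm q(1) unfolding prime_con_def by blast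
          show False using ch p q pp qq by blast
        qed
      qed
      moreover have "\<Inter>C \<subseteq> \<theta>" using x CQ unfolding Q_def by blast
      ultimately have "\<Inter>C \<in> Q" unfolding Q_def Spec_def by blast
      thus ?thesis by blast
    qed
  qed
  then obtain \<mu> where mQ: "\<mu> \<in> Q" and mM: "\<And>a. a \<in> Q \<Longrightarrow> a \<subseteq> \<mu> \<Longrightarrow> a = \<mu>" by blast
  have "\<mu> \<in> Min_Spec ar F B"
    unfolding Min_Spec_def
  proof (intro CollectI conjI ballI impI)
    show "\<mu> \<in> Spec ar F B" using mQ unfolding Q_def by blast
    fix \<psi> assume "\<psi> \<in> Spec ar F B" "\<psi> \<subseteq> \<mu>"
    moreover have "\<mu> \<subseteq> \<theta>" using mQ unfolding Q_def by blast
    ultimately show "\<psi> = \<mu>" using mM unfolding Q_def by blast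
  qed
  thus ?thesis using mQ unfolding Q_def by blast
qed

theorem mainTheorem14:
  fixes ar :: "'f \<Rightarrow> nat" and F :: "'f \<Rightarrow> 'a list \<Rightarrow> 'a" and A B :: "'a set"
  assumes "is_algebra ar F B"
    and "subalgebra ar F A B"
    and "semiprime ar F A" and "semiprime ar F B"
    and "comm_commutative ar F A" and "comm_commutative ar F B"
    and "comm_join_distributive ar F A" and "comm_join_distributive ar F B"
    and "admissible ar F A B"
  shows "\<forall>\<psi> \<in> Min_Spec ar F A. \<exists>\<mu> \<in> Min_Spec ar F B. \<mu> \<inter> (A \<times> A) = \<psi>"
proof
  fix \<psi> assume ps: "\<psi> \<in> Min_Spec ar F A"
  hence pr: "prime_con ar F A \<psi>" unfolding Min_Spec_def Spec_def by blast
  obtain \<theta> where th: "prime_con ar F B \<theta>" "\<theta> \<inter> (A \<times> A) \<subseteq> \<psi>"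
    using exists_prime_below[OF assms(1,2,6,8) pr] by blast
  obtain \<mu> where mu: "\<mu> \<in> Min_Spec ar F B" "\<mu> \<subseteq> \<theta>" using exists_min_below[OF th(1)] by blast
  have "\<mu> \<inter> (A \<times> A) \<in> Spec ar F A"
    using assms(9) mu(1) unfolding admissible_def Min_Spec_def by blast
  moreover have "\<mu> \<inter> (A \<times> A) \<subseteq> \<psi>" using mu(2) th(2) by blast
  ultimately have "\<mu> \<inter> (A \<times> A) = \<psi>" using ps unfolding Min_Spec_def by blast
  thus "\<exists>\<mu> \<in> Min_Spec ar F B. \<mu> \<inter> (A \<times> A) = \<psi>" using mu(1) by blast
qed

end
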